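(* Let $p,d\ge 1$ be integers and let $0<u\le v$ be real numbers with $uv=1$. Let $W\in\mathbb{R}^{p\times d}$ and $\Omega_c\in\mathbb{S}_{++}^d$ be fixed, and let $W\Omega_cW^T$ be eigendecomposed as $Q\,\mathrm{diag}(\mathbf{r})\,Q^T$ with $Q$ orthogonal and $\mathbf{r}\in\mathbb{R}^p$. Then an optimal solution of the problem \[ \min_{\Omega_r}\ \operatorname{tr}(\Omega_r W\Omega_c W^T) - d\log\det(\Omega_r)\quad\text{subject to}\quad uI_p\preceq \Omega_r\preceq vI_p \] is given by $Q\,\mathrm{diag}\big(\mathbb{T}_{[u,v]}(d/\mathbf{r})\big)\,Q^T$.
   Context: $\mathbb{S}_{++}^d$ denotes real symmetric positive definite $d\times d$ matrices and $\preceq$ the Loewner order; the optimization is over symmetric positive definite $\Omega_r$. The thresholding function is $\mathbb{T}_{[u,v]}(x)=\max\{u,\min\{v,x\}\}$, and $\mathbb{T}_{[u,v]}(d/\mathbf{r})$ is the vector whose $i$-th entry is $\mathbb{T}_{[u,v]}(d/r_i)$ (with the convention $d/0=+\infty$, so that a zero eigenvalue is mapped to $v$). *)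

theory Defs
  imports "HOL-Analysis.Analysis"
begin

definition symmetric_mat :: "real^'n^'n \<Rightarrow> bool" where
  "symmetric_mat A \<longleftrightarrow> transpose A = A"

definition pos_semidef :: "real^'n^'n \<Rightarrow> bool" where
  "pos_semidef A \<longleftrightarrow> symmetric_mat A \<and> (\<forall>x. 0 \<le> x \<bullet> (A *v x))"

definition pos_def :: "real^'n^'n \<Rightarrow> bool" where
  "pos_def A \<longleftrightarrow> symmetric_mat A \<and> (\<forall>x. x \<noteq> 0 \<longrightarrow> 0 < x \<bullet> (A *v x))"

definition loewner_le :: "real^'n^'n \<Rightarrow> real^'n^'n \<Rightarrow> bool" where
  "loewner_le A B \<longleftrightarrow> symmetric_mat A \<and> symmetric_mat B \<and> pos_semidef (B - A)"

definition diag_mat :: "real^'n \<Rightarrow> real^'n^'n" where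
  "diag_mat r = (\<chi> i j. if i = j then r $ i else 0)"

definition threshold :: "real \<Rightarrow> real \<Rightarrow> real \<Rightarrow> real" where
  "threshold u v x = max u (min v x)"

text \<open>Entrywise T_{[u,v]}(d / r), with the convention d/0 = +infinity (mapped to v).\<close>
definition threshold_inv_vec :: "real \<Rightarrow> real \<Rightarrow> real \<Rightarrow> real^'n \<Rightarrow> real^'n" where
  "threshold_inv_vec u v d r = (\<chi> i. if r $ i = 0 then v else threshold u v (d / r $ i))"

definition objective :: "real^'d^'p \<Rightarrow> real^'d^'d \<Rightarrow> real^'p^'p \<Rightarrow> real" where
  "objective W Oc Or = trace (Or ** W ** Oc ** transpose W) - real CARD('d) * ln (det Or)"

end

theory Submission
  imports Defs
begin

definition subm :: "real^'n^'n \<Rightarrow> 'n set \<Rightarrow> real^'n^'n" where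
  "subm M S = (\<chi> i j. if i \<in> S \<and> j \<in> S then M$i$j else (if i = j then 1 else 0))"

lemma sym_entry: "symmetric_mat M \<Longrightarrow> M$i$j = M$j$i"
  unfolding symmetric_mat_def by (metis transpose_def vec_lambda_beta)

lemma sym_mulv: "symmetric_mat M \<Longrightarrow> x v* M = M *v x"
  unfolding symmetric_mat_def by (metis vector_transpose_matrix)

lemma bilin: fixes P :: "real^'n^'m" and A :: "real^'m^'m" shows "x \<bullet> ((transpose P ** A ** P) *v y) = (P *v x) \<bullet> (A *v (P *v y))"
proof -
  have "(transpose P ** A ** P) *v y = transpose P *v (A *v (P *v y))"
    by (simp add: matrix_vector_mul_assoc matrix_mul_assoc)
  also have "\<dots> = (A *v (P *v y)) v* P" by (rule transpose_matrix_vector)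
  finally show ?thesis by (metis dot_lmul_matrix inner_commute)
qed

lemma entry_inner: "A$i$j = axis i 1 \<bullet> (A *v axis j 1)"
  by (simp add: matrix_vector_mult_basis inner_axis' column_def)

lemma qf_subm:
  "x \<bullet> (subm M S *v x) = (\<chi> i. if i \<in> S then x$i else 0) \<bullet> (M *v (\<chi> i. if i \<in> S then x$i else 0))
     + (\<Sum>i\<in>-S. (x$i)^2)"
proof -
  define z where "z = (\<chi> i. if i \<in> S then x$i else 0)"
  have 1: "subm M S *v x = (\<chi> i. if i \<in> S then (M *v z)$i else x$i)"
  unfolding vec_eq_iff
  proof (intro allI)
    fix i
    show "(subm M S *v x) $ i = (\<chi> i. if i \<in> S then (M *v z)$i else x$i) $ i"
    proof (cases "i \<in> S")
      case True
      then show ?thesis unfolding matrix_vector_mult_def subm_def z_def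
        by (auto intro!: sum.cong)
    next
      case False
      then show ?thesis unfolding matrix_vector_mult_def subm_def z_def
        by (simp add: if_distrib[of "\<lambda>t. t * _"] cong: if_cong)
    qed
  qed
  have "x \<bullet> (subm M S *v x) = (\<Sum>i\<in>UNIV. if i \<in> S then x$i * (M *v z)$i else (x$i)^2)"
    unfolding 1 inner_vec_def by (auto intro!: sum.cong simp: power2_eq_square)
  also have "\<dots> = (\<Sum>i\<in>S. x$i * (M *v z)$i) + (\<Sum>i\<in>-S. (x$i)^2)"
    by (simp add: sum.If_cases Int_def Compl_eq)
  also have "(\<Sum>i\<in>S. x$i * (M *v z)$i) = z \<bullet> (M *v z)"
  proof -
    have "z \<bullet> (M *v z) = (\<Sum>i\<in>UNIV. if i \<in> S then x$i * (M *v z)$i else 0)"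
      unfolding inner_vec_def by (rule sum.cong) (auto simp: z_def)
    also have "\<dots> = (\<Sum>i\<in>S. x$i * (M *v z)$i)"
      by (simp add: sum.If_cases Int_def)
    finally show ?thesis by simp
  qed
  finally show ?thesis unfolding z_def .
qed

lemma pos_def_subm: assumes "pos_def M" shows "pos_def (subm M S)"
  unfolding pos_def_def
proof safe
  have s: "symmetric_mat M" using assms pos_def_def by blast
  show "symmetric_mat (subm M S)"
    unfolding symmetric_mat_def subm_def transpose_def
    by (auto simp: vec_eq_iff sym_entry[OF s])
next
  fix x :: "real^'a" assume "x \<noteq> 0"
  define z where "z = (\<chi> i. if i \<in> S then x$i else 0)"
  have q: "x \<bullet> (subm M S *v x) = z \<bullet> (M *v z) + (\<Sum>i\<in>-S. (x$i)^2)"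
    unfolding z_def by (rule qf_subm)
  have nn: "(\<Sum>i\<in>-S. (x$i)^2) \<ge> 0" by (simp add: sum_nonneg)
  have zz: "z \<bullet> (M *v z) \<ge> 0" using assms unfolding pos_def_def
    by (metis inner_zero_left matrix_vector_mult_0_right order.strict_implies_order order_refl)
  show "0 < x \<bullet> (subm M S *v x)"
  proof (cases "z = 0")
    case False
    then have "z \<bullet> (M *v z) > 0" using assms pos_def_def by blast
    then show ?thesis using q nn by linarith
  next
    case True
    obtain i where xi: "x$i \<noteq> 0" using \<open>x \<noteq> 0\<close> by (auto simp: vec_eq_iff)
    have "z$i = 0" using True by simp
    hence "i \<notin> S" using xi by (simp add: z_def split: if_splits)
    then have "(x$i)^2 \<le> (\<Sum>i\<in>-S. (x$i)^2)"
      by (intro member_le_sum) auto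
    moreover have "(x$i)^2 > 0" using xi by simp
    ultimately show ?thesis using q zz by linarith
  qed
qed


lemma subm_empty: "subm M {} = mat 1" by (simp add: subm_def mat_def vec_eq_iff)
lemma subm_UNIV: "subm M UNIV = M" by (simp add: subm_def vec_eq_iff)

lemma pd_psd: "pos_def A \<Longrightarrow> 0 \<le> v \<bullet> (A *v v)"
  unfolding pos_def_def by (cases "v = 0") (auto intro: less_imp_le)

lemma pd_solve: assumes "pos_def (A::real^'n^'n)" shows "\<exists>y. A *v y = b"
proof -
  have "inj ((*v) A)" unfolding vec.inj_iff_eq_0
  proof (intro allI impI)
    fix v assume "A *v v = 0"
    then show "v = 0" using assms unfolding pos_def_def by force
  qed
  then obtain B where "B ** A = mat 1" using matrix_left_invertible_injective by blast
  then have "A ** B = mat 1" using matrix_left_right_inverse by blast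
  then have "A *v (B *v b) = b" by (simp add: matrix_vector_mul_assoc)
  then show ?thesis by blast
qed

lemma row_mat1: "row j (mat 1 :: real^'n^'n) = axis j 1"
  by (simp add: row_def mat_def axis_def vec_eq_iff)

lemma smult_axis: "c *s axis k (1::real) = axis k c"
  by (simp add: axis_def vec_eq_iff)

lemma hadamard_step:
  fixes M :: "real^'n^'n"
  assumes pd: "pos_def M" and k: "k \<notin> S"
  shows "\<exists>c. 0 < c \<and> c \<le> M$k$k \<and> det (subm M (insert k S)) = c * det (subm M S)"
proof -
  define N where "N = subm M (insert k S)"
  define B where "B = subm M S"
  have pdN: "pos_def N" and pdB: "pos_def B" using pos_def_subm pd N_def B_def by blast+
  have symN: "symmetric_mat N" using pdN pos_def_def by blast
  define b where "b = (\<chi> i. if i \<in> S then M$i$k else 0)"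
  obtain y where By: "B *v y = b" using pd_solve[OF pdB] by blast
  have yout: "y$j = 0" if "j \<notin> S" for j
  proof -
    have "(B *v y)$j = y$j" using that unfolding B_def subm_def matrix_vector_mult_def
      by (simp add: if_distrib[of "\<lambda>t. t * _"] cong: if_cong)
    then show ?thesis using By that b_def by simp
  qed
  have yk: "y$k = 0" using yout k .
  define e where "e = (axis k 1 :: real^'n)"
  define x where "x = e - y"
  have xk: "x$k = 1" by (simp add: x_def e_def yk axis_def)
  have NyB: "(N *v y)$a = (B *v y)$a" if "a \<noteq> k" for a
    unfolding matrix_vector_mult_def N_def B_def subm_def using that yout k
    by (auto intro!: sum.cong)
  have Ne: "(N *v e)$a = N$a$k" for a by (simp add: e_def matrix_vector_mult_basis column_def)
  define c where "c = (N *v x)$k"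
  have Nx: "N *v x = c *s e"
  proof -
    have "(N *v x)$a = (c *s e)$a" for a
    proof (cases "a = k")
      case True then show ?thesis by (simp add: c_def e_def)
    next
      case False
      have "(N *v x)$a = N$a$k - b$a" using NyB[OF False] By Ne
        by (simp add: x_def matrix_vector_mult_diff_distrib)
      also have "\<dots> = 0" using False by (simp add: N_def subm_def b_def)
      finally show ?thesis using False by (simp add: e_def axis_def)
    qed
    then show ?thesis by (simp add: vec_eq_iff)
  qed
  have xNx: "x \<bullet> (N *v x) = c" unfolding Nx e_def smult_axis inner_axis using xk by simp
  have "x \<noteq> 0" using xk by auto
  then have cpos: "0 < c" using pdN xNx unfolding pos_def_def by auto
  have xNe: "x \<bullet> (N *v e) = c"
  proof -
    have "x \<bullet> (N *v e) = (x v* N) \<bullet> e" by (simp add: dot_lmul_matrix)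
    also have "\<dots> = (N *v x) \<bullet> e" using sym_mulv[OF symN] by simp
    also have "\<dots> = c" unfolding Nx e_def smult_axis by (simp add: inner_axis_axis)
    finally show ?thesis .
  qed
  have "0 \<le> y \<bullet> (N *v y)" using pd_psd[OF pdN] .
  moreover have "y = e - x" by (simp add: x_def)
  ultimately have "0 \<le> (e - x) \<bullet> (N *v e - c *s e)" by (simp add: matrix_vector_mult_diff_distrib Nx)
  also have "(e - x) \<bullet> (N *v e - c *s e) = e \<bullet> (N *v e) - x \<bullet> (N *v e) - c * (e \<bullet> e) + c * (x \<bullet> e)"
    by (simp add: inner_diff_left inner_diff_right scalar_mult_eq_scaleR algebra_simps)
  also have "\<dots> = N$k$k - c" using xNe xk Ne unfolding e_def by (simp add: inner_axis' inner_axis inner_axis_axis)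
  finally have cle: "c \<le> M$k$k" by (simp add: N_def subm_def)
  define E :: "real^'n^'n" where "E = (\<chi> i j. if j = k then x$i else (if i = j then 1 else 0))"
  have Ecol: "E *v axis j 1 = (if j = k then x else axis j 1)" for j
    unfolding matrix_vector_mult_basis column_def E_def by (auto simp: vec_eq_iff axis_def)
  have detE: "det E = 1"
  proof -
    have tE: "transpose E = (\<chi> i. if i = k then row k (mat 1) + (- y) else row i (mat 1))"
      by (auto simp add: vec_eq_iff transpose_def E_def row_def mat_def x_def e_def axis_def)
    have "- y = (\<Sum>j\<in>UNIV. (- y)$j *s axis j 1)" by (rule basis_expansion[symmetric])
    also have "\<dots> \<in> vec.span {row j (mat 1) |j. j \<noteq> k}"
    proof (rule vec.span_sum)
      fix j :: 'n
      show "(- y)$j *s axis j 1 \<in> vec.span {row j (mat 1) |j. j \<noteq> k}"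
      proof (cases "j = k")
        case True then show ?thesis by (simp add: yk vec.span_zero)
      next
        case False
        then have "axis j 1 \<in> vec.span {row j (mat 1 :: real^'n^'n) |j. j \<noteq> k}"
          by (intro vec.span_base) (auto simp: row_mat1)
        then show ?thesis by (rule vec.span_scale)
      qed
    qed
    finally have "det (transpose E) = det (mat 1 :: real^'n^'n)"
      unfolding tE by (rule det_row_span)
    then show ?thesis by (simp add: det_transpose)
  qed
  have EtNE: "transpose E ** N ** E = (\<chi> i. if i = k then c *s row i B else row i B)"
  proof -
    have "(transpose E ** N ** E)$i$j = (\<chi> i. if i = k then c *s row i B else row i B)$i$j" for i j
    proof -
      have "(transpose E ** N ** E)$i$j = (E *v axis i 1) \<bullet> (N *v (E *v axis j 1))"
        by (simp add: entry_inner[of "transpose E ** N ** E"] bilin)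
      also have "\<dots> = (if i = k then c *s row i B else row i B)$j"
      proof (cases "j = k")
        case True
        have "(E *v axis i 1) \<bullet> (N *v (E *v axis j 1)) = (E *v axis i 1) \<bullet> axis k c"
          unfolding Ecol[of j] using True by (simp add: Nx e_def smult_axis)
        also have "\<dots> = (E *v axis i 1)$k * c" by (simp add: inner_axis)
        also have "(E *v axis i 1)$k = (if i = k then 1 else 0)"
          unfolding Ecol[of i] using xk by (simp add: axis_def)
        finally show ?thesis using True k by (simp add: row_def B_def subm_def)
      next
        case jk: False
        show ?thesis
        proof (cases "i = k")
          case True
          have "x \<bullet> (N *v axis j 1) = (x v* N) \<bullet> axis j 1" by (simp add: dot_lmul_matrix)
          also have "\<dots> = (N *v x) \<bullet> axis j 1" using sym_mulv[OF symN] by simp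
          also have "\<dots> = 0" unfolding Nx e_def smult_axis using jk by (simp add: inner_axis_axis)
          finally show ?thesis using True jk k
            by (simp add: Ecol row_def B_def subm_def)
        next
          case False
          have "(E *v axis i 1) \<bullet> (N *v (E *v axis j 1)) = axis i 1 \<bullet> (N *v axis j 1)"
            unfolding Ecol[of i] Ecol[of j] using False jk by simp
          also have "\<dots> = N$i$j" by (rule entry_inner[symmetric])
          finally show ?thesis using False jk by (simp add: row_def B_def N_def subm_def)
        qed
      qed
      finally show ?thesis by simp
    qed
    then show ?thesis by (simp add: vec_eq_iff)
  qed
  have "det (transpose E ** N ** E) = det N"
    by (simp add: det_mul det_transpose detE)
  moreover have "det (\<chi> i. if i = k then c *s row i B else row i B) = c * det B"
    by (subst det_row_mul) (simp add: row_def vec_lambda_eta)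
  ultimately have "det N = c * det B" using EtNE by simp
  then show ?thesis using cpos cle N_def B_def by blast
qed


lemma hadamard:
  fixes M :: "real^'n^'n"
  assumes pd: "pos_def M"
  shows "0 < det M \<and> det M \<le> (\<Prod>i\<in>UNIV. M$i$i)"
proof -
  have "finite S \<Longrightarrow> 0 < det (subm M S) \<and> det (subm M S) \<le> (\<Prod>i\<in>S. M$i$i)" for S
  proof (induction S rule: finite_induct)
    case empty then show ?case by (simp add: subm_empty det_I)
  next
    case (insert k S)
    obtain c where c: "0 < c" "c \<le> M$k$k" "det (subm M (insert k S)) = c * det (subm M S)"
      using hadamard_step[OF pd insert(2)] by blast
    have "c * det (subm M S) \<le> M$k$k * (\<Prod>i\<in>S. M$i$i)"
      using c insert.IH by (intro mult_mono) auto
    then show ?case using insert c by simp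
  qed
  from this[of UNIV] show ?thesis by (simp add: subm_UNIV)
qed

lemma sym_diff: "symmetric_mat A \<Longrightarrow> symmetric_mat B \<Longrightarrow> symmetric_mat (A - B)"
  unfolding symmetric_mat_def by (simp add: transpose_def vec_eq_iff)

lemma sym_mat: "symmetric_mat (mat a :: real^'n^'n)"
  unfolding symmetric_mat_def by (rule transpose_mat)

lemma mat_mulv: "(mat a :: real^'n^'n) *v x = a *s x"
  by (simp add: mat_def matrix_vector_mult_def vec_eq_iff if_distrib[of "\<lambda>t. t * _"] cong: if_cong)

lemma inner_smult: "(x::real^'n) \<bullet> (a *s y) = a * (x \<bullet> y)"
  by (simp add: scalar_mult_eq_scaleR)

lemma diag_qf: "z \<bullet> (diag_mat d *v z) = (\<Sum>i\<in>UNIV. d$i * (z$i)^2)"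
proof -
  have "diag_mat d *v z = (\<chi> i. d$i * z$i)"
    by (simp add: diag_mat_def matrix_vector_mult_def vec_eq_iff if_distrib[of "\<lambda>t. t * _"] cong: if_cong)
  then show ?thesis by (simp add: inner_vec_def power2_eq_square algebra_simps)
qed

lemma orth_norm:
  fixes Q :: "real^'n^'n"
  assumes "orthogonal_matrix Q"
  shows "(transpose Q *v x) \<bullet> (transpose Q *v x) = x \<bullet> x" "(Q *v x) \<bullet> (Q *v x) = x \<bullet> x"
proof -
  have QQ: "transpose Q ** Q = mat 1" "Q ** transpose Q = mat 1" using assms orthogonal_matrix_def by auto
  have "x \<bullet> ((transpose (transpose Q) ** mat 1 ** transpose Q) *v x) = (transpose Q *v x) \<bullet> (mat 1 *v (transpose Q *v x))"
    by (rule bilin)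
  then show "(transpose Q *v x) \<bullet> (transpose Q *v x) = x \<bullet> x" using QQ by simp
  have "x \<bullet> ((transpose Q ** mat 1 ** Q) *v x) = (Q *v x) \<bullet> (mat 1 *v (Q *v x))"
    by (rule bilin)
  then show "(Q *v x) \<bullet> (Q *v x) = x \<bullet> x" using QQ by simp
qed

lemma conj_diag_qf:
  fixes Q :: "real^'n^'n"
  shows "x \<bullet> ((Q ** diag_mat d ** transpose Q) *v x) = (\<Sum>i\<in>UNIV. d$i * ((transpose Q *v x)$i)^2)"
proof -
  have "x \<bullet> ((transpose (transpose Q) ** diag_mat d ** transpose Q) *v x) = (transpose Q *v x) \<bullet> (diag_mat d *v (transpose Q *v x))"
    by (rule bilin)
  then show ?thesis by (simp add: diag_qf)
qed

lemma sym_conj_diag: "symmetric_mat (Q ** diag_mat d ** transpose Q)"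
proof -
  have "transpose (diag_mat d) = diag_mat d"
    by (auto simp: diag_mat_def transpose_def vec_eq_iff)
  then show ?thesis unfolding symmetric_mat_def by (simp add: matrix_transpose_mul matrix_mul_assoc)
qed

lemma scalar_opt:
  fixes u v \<rho> n m :: real
  assumes "0 < u" "u \<le> v" "0 \<le> \<rho>" "0 < n" "u \<le> m" "m \<le> v"
  defines "t \<equiv> (if \<rho> = 0 then v else threshold u v (n / \<rho>))"
  shows "t * \<rho> - n * ln t \<le> m * \<rho> - n * ln m"
proof (cases "\<rho> = 0")
  case True
  then have "ln m \<le> ln t" using assms by (simp add: t_def)
  then show ?thesis using True assms by simp
next
  case False
  then have rp: "\<rho> > 0" using assms by simp
  have tdef: "t = max u (min v (n / \<rho>))" using False by (simp add: t_def threshold_def)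
  have tu: "u \<le> t" "t \<le> v" using tdef assms by auto
  have tp: "t > 0" using tu assms by simp
  have mp: "m > 0" using assms by simp
  have key: "(m - t) * (n - \<rho> * t) \<le> 0"
  proof -
    consider "t = n / \<rho>" | "t = u" "n / \<rho> \<le> u" | "t = v" "v \<le> n / \<rho>"
      using tdef assms by linarith
    then show ?thesis
    proof cases
      case 1 then show ?thesis using rp by simp
    next
      case 2
      then have "n \<le> \<rho> * t" using rp by (simp add: divide_le_eq mult.commute)
      moreover have "m - t \<ge> 0" using 2 assms by simp
      ultimately show ?thesis by (simp add: mult_nonneg_nonpos)
    next
      case 3
      then have "n \<ge> \<rho> * t" using rp by (simp add: le_divide_eq mult.commute)
      moreover have "m - t \<le> 0" using 3 assms by simp
      ultimately show ?thesis by (simp add: mult_nonpos_nonneg)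
    qed
  qed
  have "ln (m / t) \<le> m / t - 1" using mp tp by (intro ln_le_minus_one) simp
  then have l: "ln m - ln t \<le> (m - t) / t" using mp tp by (simp add: ln_div diff_divide_distrib)
  have "n * (ln m - ln t) \<le> n * ((m - t) / t)" using l assms by (intro mult_left_mono) auto
  also have "n * ((m - t) / t) \<le> \<rho> * (m - t)"
  proof -
    have "n * ((m - t) / t) - \<rho> * (m - t) = (m - t) * (n - \<rho> * t) / t"
      using tp by (simp add: field_simps)
    also have "\<dots> \<le> 0" using key tp by (simp add: divide_nonpos_pos)
    finally show ?thesis by simp
  qed
  finally show ?thesis by (simp add: algebra_simps)
qed


theorem corollary1:
  fixes W :: "real^'d^'p" and Oc :: "real^'d^'d" and Q :: "real^'p^'p" and r :: "real^'p"
    and u v :: real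
  assumes "0 < u" and "u \<le> v" and "u * v = 1"
    and "pos_def Oc"
    and "orthogonal_matrix Q"
    and "W ** Oc ** transpose W = Q ** diag_mat r ** transpose Q"
  shows "let X = Q ** diag_mat (threshold_inv_vec u v (real CARD('d)) r) ** transpose Q in
           pos_def X \<and> loewner_le (mat u) X \<and> loewner_le X (mat v) \<and>
           (\<forall>Or :: real^'p^'p. pos_def Or \<and> loewner_le (mat u) Or \<and> loewner_le Or (mat v)
               \<longrightarrow> objective W Oc X \<le> objective W Oc Or)"
proof -
  define n where "n = real CARD('d)"
  define t where "t = threshold_inv_vec u v n r"
  define X where "X = Q ** diag_mat t ** transpose Q"
  define A where "A = W ** Oc ** transpose W"
  have QQ: "transpose Q ** Q = mat 1" "Q ** transpose Q = mat 1"
    using assms(5) orthogonal_matrix_def by auto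
  have npos: "0 < n" by (simp add: n_def)
  have tdef: "t$i = (if r$i = 0 then v else threshold u v (n / r$i))" for i
    by (simp add: t_def threshold_inv_vec_def)
  have tuv: "u \<le> t$i \<and> t$i \<le> v" for i using assms(2) by (auto simp: tdef threshold_def)
  have tpos: "0 < t$i" for i using tuv[of i] assms(1) by linarith
  have conj: "transpose Q ** (Q ** D ** transpose Q) ** Q = D" for D :: "real^'p^'p"
  proof -
    have "transpose Q ** (Q ** D ** transpose Q) ** Q = (transpose Q ** Q) ** D ** (transpose Q ** Q)"
      by (simp add: matrix_mul_assoc)
    then show ?thesis by (simp add: QQ)
  qed
  have Dr: "transpose Q ** A ** Q = diag_mat r"
    unfolding A_def assms(6) by (rule conj)
  have Apsd: "0 \<le> z \<bullet> (A *v z)" for z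
  proof -
    have "z \<bullet> ((transpose (transpose W) ** Oc ** transpose W) *v z) = (transpose W *v z) \<bullet> (Oc *v (transpose W *v z))"
      by (rule bilin)
    then show ?thesis using pd_psd[OF assms(4)] by (simp add: A_def)
  qed
  have r_nonneg: "0 \<le> r$i" for i
  proof -
    have "r$i = (diag_mat r)$i$i" by (simp add: diag_mat_def)
    also have "\<dots> = axis i 1 \<bullet> (diag_mat r *v axis i 1)" by (rule entry_inner)
    also have "\<dots> = (Q *v axis i 1) \<bullet> (A *v (Q *v axis i 1))" by (simp only: Dr[symmetric] bilin)
    finally show ?thesis using Apsd by simp
  qed
  have Qinv: "Q *v (transpose Q *v x) = x" "transpose Q *v (Q *v x) = x" for x
    by (simp_all only: matrix_vector_mul_assoc QQ matrix_vector_mul_lid)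
  have sumsq: "x \<bullet> x = (\<Sum>i\<in>UNIV. ((transpose Q *v x)$i)^2)" for x
    using orth_norm(1)[OF assms(5), of x] by (simp add: inner_vec_def power2_eq_square)
  have Xqf: "x \<bullet> (X *v x) = (\<Sum>i\<in>UNIV. t$i * ((transpose Q *v x)$i)^2)" for x
    unfolding X_def by (rule conj_diag_qf)
  have symX: "symmetric_mat X" unfolding X_def by (rule sym_conj_diag)
  have pdX: "pos_def X"
    unfolding pos_def_def
  proof (intro conjI allI impI symX)
    fix x :: "real^'p" assume "x \<noteq> 0"
    define z where "z = transpose Q *v x"
    have "z \<noteq> 0" using \<open>x \<noteq> 0\<close> Qinv(1)[of x] by (auto simp: z_def)
    then obtain j where zj: "z$j \<noteq> 0" by (auto simp: vec_eq_iff)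
    have "0 < t$j * (z$j)^2" using zj tpos by simp
    also have "\<dots> \<le> (\<Sum>i\<in>UNIV. t$i * (z$i)^2)"
    proof (rule member_le_sum)
      show "0 \<le> t$i * (z$i)^2" for i using tpos[of i] by simp
    qed auto
    finally show "0 < x \<bullet> (X *v x)" using Xqf z_def by simp
  qed
  have low: "loewner_le (mat u) X"
    unfolding loewner_le_def pos_semidef_def
  proof (intro conjI allI sym_mat symX sym_diff)
    fix x :: "real^'p"
    have "x \<bullet> ((X - mat u) *v x) = x \<bullet> (X *v x) - u * (x \<bullet> x)"
      by (simp add: matrix_vector_mult_diff_rdistrib mat_mulv inner_diff_right inner_smult)
    also have "\<dots> = (\<Sum>i\<in>UNIV. (t$i - u) * ((transpose Q *v x)$i)^2)"
      by (simp add: Xqf sumsq sum_distrib_left sum_subtractf algebra_simps)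
    also have "\<dots> \<ge> 0" using tuv by (intro sum_nonneg) simp
    finally show "0 \<le> x \<bullet> ((X - mat u) *v x)" .
  qed
  have upp: "loewner_le X (mat v)"
    unfolding loewner_le_def pos_semidef_def
  proof (intro conjI allI sym_mat symX sym_diff)
    fix x :: "real^'p"
    have "x \<bullet> ((mat v - X) *v x) = v * (x \<bullet> x) - x \<bullet> (X *v x)"
      by (simp add: matrix_vector_mult_diff_rdistrib mat_mulv inner_diff_right inner_smult)
    also have "\<dots> = (\<Sum>i\<in>UNIV. (v - t$i) * ((transpose Q *v x)$i)^2)"
      by (simp add: Xqf sumsq sum_distrib_left sum_subtractf algebra_simps)
    also have "\<dots> \<ge> 0" using tuv by (intro sum_nonneg) simp
    finally show "0 \<le> x \<bullet> ((mat v - X) *v x)" .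
  qed
  have objf: "objective W Oc Om = (\<Sum>i\<in>UNIV. (transpose Q ** Om ** Q)$i$i * r$i) - n * ln (det (transpose Q ** Om ** Q))"
    for Om :: "real^'p^'p"
  proof -
    define M where "M = transpose Q ** Om ** Q"
    have "Om ** W ** Oc ** transpose W = Om ** (W ** Oc ** transpose W)" by (simp add: matrix_mul_assoc)
    also have "\<dots> = Om ** (Q ** diag_mat r ** transpose Q)" by (simp only: assms(6))
    also have "\<dots> = (Om ** Q ** diag_mat r) ** transpose Q" by (simp add: matrix_mul_assoc)
    finally have "trace (Om ** W ** Oc ** transpose W) = trace ((Om ** Q ** diag_mat r) ** transpose Q)"
      by simp
    also have "\<dots> = trace (transpose Q ** (Om ** Q ** diag_mat r))" by (rule trace_mul_sym)
    also have "\<dots> = trace (M ** diag_mat r)" by (simp add: M_def matrix_mul_assoc)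
    also have "\<dots> = (\<Sum>i\<in>UNIV. M$i$i * r$i)"
      by (simp add: trace_def matrix_matrix_mult_def diag_mat_def if_distrib[of "\<lambda>t. _ * t"] cong: if_cong)
    finally have tr: "trace (Om ** W ** Oc ** transpose W) = (\<Sum>i\<in>UNIV. M$i$i * r$i)" .
    have "det M = det Om * (det (transpose Q) * det Q)" by (simp add: M_def det_mul)
    also have "det (transpose Q) * det Q = 1" using QQ by (metis det_I det_mul)
    finally have "det M = det Om" by simp
    then show ?thesis using tr unfolding objective_def M_def n_def by simp
  qed
  have objX: "objective W Oc X = (\<Sum>i\<in>UNIV. t$i * r$i - n * ln (t$i))"
  proof -
    have "transpose Q ** X ** Q = diag_mat t" unfolding X_def by (rule conj)
    moreover have "det (diag_mat t) = (\<Prod>i\<in>UNIV. t$i)"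
      by (subst det_diagonal) (auto simp: diag_mat_def)
    moreover have "ln (\<Prod>i\<in>UNIV. t$i) = (\<Sum>i\<in>UNIV. ln (t$i))"
      using tpos by (intro ln_prod) (auto simp: less_imp_neq[symmetric])
    ultimately show ?thesis using objf[of X]
      by (simp add: diag_mat_def sum_subtractf sum_distrib_left)
  qed
  have opt: "objective W Oc X \<le> objective W Oc Om"
    if pdO: "pos_def Om" and lO: "loewner_le (mat u) Om" and uO: "loewner_le Om (mat v)" for Om :: "real^'p^'p"
  proof -
    define M where "M = transpose Q ** Om ** Q"
    have symO: "symmetric_mat Om" using pdO pos_def_def by blast
    have pdM: "pos_def M"
      unfolding pos_def_def
    proof (intro conjI allI impI)
      show "symmetric_mat M" using symO unfolding symmetric_mat_def M_def
        by (simp add: matrix_transpose_mul matrix_mul_assoc)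
    next
      fix x :: "real^'p" assume "x \<noteq> 0"
      then have "Q *v x \<noteq> 0" using Qinv(2)[of x] by auto
      then have "0 < (Q *v x) \<bullet> (Om *v (Q *v x))" using pdO pos_def_def by blast
      then show "0 < x \<bullet> (M *v x)" unfolding M_def by (simp add: bilin)
    qed
    have Mii: "M$i$i = (Q *v axis i 1) \<bullet> (Om *v (Q *v axis i 1))" for i
      unfolding M_def by (simp add: entry_inner[of "transpose Q ** Om ** Q"] bilin)
    have qq: "(Q *v axis i 1) \<bullet> (Q *v axis i 1) = 1" for i
      using orth_norm(2)[OF assms(5), of "axis i 1"] by (simp add: inner_axis_axis)
    have Muv: "u \<le> M$i$i \<and> M$i$i \<le> v" for i
    proof -
      define q where "q = Q *v axis i 1"
      have "0 \<le> q \<bullet> ((Om - mat u) *v q)" using lO unfolding loewner_le_def pos_semidef_def by blast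
      then have 1: "u \<le> q \<bullet> (Om *v q)" using qq[of i]
        by (simp add: q_def matrix_vector_mult_diff_rdistrib mat_mulv inner_diff_right inner_smult)
      have "0 \<le> q \<bullet> ((mat v - Om) *v q)" using uO unfolding loewner_le_def pos_semidef_def by blast
      then have 2: "q \<bullet> (Om *v q) \<le> v" using qq[of i]
        by (simp add: q_def matrix_vector_mult_diff_rdistrib mat_mulv inner_diff_right inner_smult)
      show ?thesis using 1 2 Mii[of i] q_def by simp
    qed
    have Mpos: "0 < M$i$i" for i using Muv[of i] assms(1) by linarith
    have had: "0 < det M" "det M \<le> (\<Prod>i\<in>UNIV. M$i$i)" using hadamard[OF pdM] by auto
    have "ln (det M) \<le> ln (\<Prod>i\<in>UNIV. M$i$i)" using had by simp
    also have "\<dots> = (\<Sum>i\<in>UNIV. ln (M$i$i))"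
      using Mpos by (intro ln_prod) (auto simp: less_imp_neq[symmetric])
    finally have lnM: "ln (det M) \<le> (\<Sum>i\<in>UNIV. ln (M$i$i))" .
    have "objective W Oc X = (\<Sum>i\<in>UNIV. t$i * r$i - n * ln (t$i))" by (rule objX)
    also have "\<dots> \<le> (\<Sum>i\<in>UNIV. M$i$i * r$i - n * ln (M$i$i))"
    proof (rule sum_mono)
      fix i :: 'p
      show "t$i * r$i - n * ln (t$i) \<le> M$i$i * r$i - n * ln (M$i$i)"
        using scalar_opt[OF assms(1) assms(2) r_nonneg[of i] npos, of "M$i$i"] Muv[of i]
        by (simp add: tdef)
    qed
    also have "\<dots> = (\<Sum>i\<in>UNIV. M$i$i * r$i) - n * (\<Sum>i\<in>UNIV. ln (M$i$i))"
      by (simp add: sum_subtractf sum_distrib_left)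
    also have "\<dots> \<le> (\<Sum>i\<in>UNIV. M$i$i * r$i) - n * ln (det M)"
      using lnM npos by (simp add: mult_left_mono)
    also have "\<dots> = objective W Oc Om" using objf[of Om] M_def by simp
    finally show ?thesis .
  qed
  show ?thesis unfolding Let_def X_def[symmetric] t_def[symmetric] n_def[symmetric]
    using pdX low upp opt by blast
qed

end
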